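(* Let $G=(V,E)$ be a graph with $N$ vertices and $M$ edges, let $d_{ij}\geq 0$ for each $ij\in E$, $d:=(d_{ij}^2)_{ij\in E}\in\mathbb{R}^M$, and define $\psi_{G,d}:\mathbb{R}^{nN}\to\mathbb{R}$ by $\psi_{G,d}(p)=\frac14\sum_{ij\in E}(\|p_j-p_i\|^2-d_{ij}^2)^2$. Write $\psi_{G,d}^{-1}(\leq r)=\{p\mid\psi_{G,d}(p)\leq r\}$. (a) For every $r>0$ there exists $c_1>0$ such that $\|\nabla\psi_{G,d}(p)\|^2\leq c_1\psi_{G,d}(p)$ for every $p\in\psi_{G,d}^{-1}(\leq r)$. (b) For every $r>0$ and every integer $l\geq2$ there exists $c_2>0$ such that $|\mathrm{D}^l\psi_{G,d}(p)(v_1,\ldots,v_l)|\leq c_2\|v_1\|\cdots\|v_l\|$ for every $p\in\psi_{G,d}^{-1}(\leq r)$ and all $v_1,\ldots,v_l\in\mathbb{R}^{nN}$. (c) Suppose that for each $p\in f_G^{-1}(d)$ the framework $G(p)$ is infinitesimally rigid. Then there exist $r,c_3>0$ such that $\|\nabla\psi_{G,d}(p)\|^2\geq c_3\psi_{G,d}(p)$ for every $p\in\psi_{G,d}^{-1}(\leq r)$.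
   Context: A graph $G=(V,E)$ has $V=\{1,\ldots,N\}$ and a nonempty set $E$ of two-element subsets $\{i,j\}$ of $V$ (written $ij$). Points of $\mathbb{R}^{nN}$ are $p=(p_1,\ldots,p_N)$ with $p_i\in\mathbb{R}^n$. The edge map is $f_G:\mathbb{R}^{nN}\to\mathbb{R}^M$, $f_G(p)=(\|p_j-p_i\|^2)_{ij\in E}$ (edges ordered as in $d$). A framework $G(p)$ is $G$ together with $p$. Let $C$ be the complete graph on $N$ vertices; $f_C^{-1}(f_C(p))$ is a smooth submanifold of $\mathbb{R}^{nN}$. $G(p)$ is infinitesimally rigid if the tangent space to $f_C^{-1}(f_C(p))$ at $p$ equals $\ker \mathrm{D}f_G(p)$. $\mathrm{D}^l$ denotes the $l$-th derivative as an $l$-linear map. *)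

theory Defs
  imports "HOL-Analysis.Analysis"
begin

text \<open>Vertices are the elements of a finite type 'v (so N = CARD('v)); points of
R^{nN} are p :: real^'n^'v with p$i \<in> R^n. Edges are two-element subsets of 'v.\<close>

definition is_graph :: "'v set set \<Rightarrow> bool" where
  "is_graph E \<longleftrightarrow> E \<noteq> {} \<and> (\<forall>e\<in>E. \<exists>i j. i \<noteq> j \<and> e = {i, j})"

text \<open>Squared length of edge e = {i,j} in the configuration p (independent of the
choice of order of i and j).\<close>
definition edge_sqlen :: "real^'n^'v \<Rightarrow> 'v set \<Rightarrow> real" where
  "edge_sqlen p e = (let ij = (SOME ij. fst ij \<noteq> snd ij \<and> e = {fst ij, snd ij})
                      in (norm (p $ snd ij - p $ fst ij))\<^sup>2)"

definition psi :: "'v set set \<Rightarrow> ('v set \<Rightarrow> real) \<Rightarrow> real^'n^'v \<Rightarrow> real" where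
  "psi E dl p = (1/4) * (\<Sum>e\<in>E. (edge_sqlen p e - (dl e)\<^sup>2)\<^sup>2)"

definition grad :: "('a::euclidean_space \<Rightarrow> real) \<Rightarrow> 'a \<Rightarrow> 'a" where
  "grad f p = (THE g. (f has_derivative (\<lambda>v. g \<bullet> v)) (at p))"

fun higher_deriv :: "('a::real_normed_vector \<Rightarrow> real) \<Rightarrow> 'a list \<Rightarrow> 'a \<Rightarrow> real" where
  "higher_deriv f [] p = f p"
| "higher_deriv f (v # vs) p = frechet_derivative (\<lambda>q. higher_deriv f vs q) (at p) v"

definition tangent_space :: "'a::real_normed_vector set \<Rightarrow> 'a \<Rightarrow> 'a set" where
  "tangent_space S p = {v. \<exists>\<gamma> \<epsilon>. \<epsilon> > 0 \<and> \<gamma> 0 = p \<and> (\<forall>t\<in>ball 0 \<epsilon>. \<gamma> t \<in> S)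
                              \<and> (\<gamma> has_vector_derivative v) (at 0)}"

text \<open>f_C^{-1}(f_C(p)) for the complete graph C.\<close>
definition congruent_configs :: "real^'n^'v \<Rightarrow> (real^'n^'v) set" where
  "congruent_configs p = {q. \<forall>i j. i \<noteq> j \<longrightarrow> (norm (q $ j - q $ i))\<^sup>2 = (norm (p $ j - p $ i))\<^sup>2}"

text \<open>ker D f_G(p): f_G has components edge_sqlen _ e, e \<in> E.\<close>
definition ker_Df :: "'v set set \<Rightarrow> real^'n^'v \<Rightarrow> (real^'n^'v) set" where
  "ker_Df E p = {v. \<forall>e\<in>E. frechet_derivative (\<lambda>q. edge_sqlen q e) (at p) v = 0}"

definition inf_rigid :: "'v set set \<Rightarrow> real^'n^'v \<Rightarrow> bool" where
  "inf_rigid E p \<longleftrightarrow> tangent_space (congruent_configs p) p = ker_Df E p"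

definition realizations :: "'v set set \<Rightarrow> ('v set \<Rightarrow> real) \<Rightarrow> (real^'n^'v) set" where
  "realizations E dl = {p. \<forall>e\<in>E. edge_sqlen p e = (dl e)\<^sup>2}"

end

theory Submission
  imports Defs
begin


definition src :: "'v set \<Rightarrow> 'v" where
  "src e = fst (SOME ij. fst ij \<noteq> snd ij \<and> e = {fst ij, snd ij})"
definition tgt :: "'v set \<Rightarrow> 'v" where
  "tgt e = snd (SOME ij. fst ij \<noteq> snd ij \<and> e = {fst ij, snd ij})"
definition Xe :: "'v set \<Rightarrow> real^'n^'v \<Rightarrow> real^'n" where
  "Xe e p = p $ tgt e - p $ src e"

lemma edge_sqlen_Xe: "edge_sqlen p e = Xe e p \<bullet> Xe e p"
  unfolding edge_sqlen_def Let_def Xe_def src_def tgt_def by (simp add: power2_norm_eq_inner)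

lemma src_tgt:
  assumes "is_graph E" "e \<in> E"
  shows "src e \<noteq> tgt e" "e = {src e, tgt e}"
proof -
  have "\<exists>ij. fst ij \<noteq> snd ij \<and> e = {fst ij, snd ij}"
    using assms unfolding is_graph_def by force
  from someI_ex[OF this] show "src e \<noteq> tgt e" "e = {src e, tgt e}"
    unfolding src_def tgt_def by auto
qed

lemma Xe_add: "Xe e (p + q) = Xe e p + Xe e q"
  unfolding Xe_def by simp
lemma Xe_scale: "Xe e (c *\<^sub>R p) = c *\<^sub>R Xe e p"
  unfolding Xe_def by (simp add: algebra_simps)
lemma Xe_diff: "Xe e (p - q) = Xe e p - Xe e q"
  unfolding Xe_def by simp
lemma Xe_norm: "norm (Xe e p) \<le> 2 * norm p"
  unfolding Xe_def using norm_triangle_ineq4[of "p $ tgt e" "p $ src e"]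
    Finite_Cartesian_Product.norm_nth_le[of p "tgt e"] Finite_Cartesian_Product.norm_nth_le[of p "src e"]
  by linarith
lemma bl_Xe: "bounded_linear (Xe e)"
  by (rule bounded_linear_intro[where K=2]) (auto simp: Xe_add Xe_scale Xe_norm mult.commute[of _ 2])
lemma Xe_has_derivative: "(Xe e has_derivative Xe e) F"
  by (rule bounded_linear_imp_has_derivative[OF bl_Xe])

lemma Xe_lim: "(f \<longlongrightarrow> l) F \<Longrightarrow> ((\<lambda>x. Xe e (f x)) \<longlongrightarrow> Xe e l) F"
  using bounded_linear.tendsto[OF bl_Xe] .

definition gE :: "('v set \<Rightarrow> real) \<Rightarrow> real^'n^'v \<Rightarrow> 'v set \<Rightarrow> real" where
  "gE dl p e = Xe e p \<bullet> Xe e p - (dl e)\<^sup>2"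

lemma psi_eq: "psi E dl p = (1/4) * (\<Sum>e\<in>E. (gE dl p e)\<^sup>2)"
  unfolding psi_def gE_def edge_sqlen_Xe ..

lemma gE_deriv: "((\<lambda>q. gE dl q e) has_derivative (\<lambda>v. 2 * (Xe e p \<bullet> Xe e v))) (at p)"
  unfolding gE_def
  by (auto intro!: derivative_eq_intros Xe_has_derivative simp: inner_commute)

lemma psi_deriv: "(psi E dl has_derivative (\<lambda>v. \<Sum>e\<in>E. gE dl p e * (Xe e p \<bullet> Xe e v))) (at p)"
  unfolding psi_eq[abs_def]
  by (auto intro!: derivative_eq_intros gE_deriv ext simp: sum_divide_distrib ac_simps)

definition av :: "'v set \<Rightarrow> real^'n \<Rightarrow> real^'n^'v" where
  "av e y = axis (tgt e) y - axis (src e) y"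

lemma av_inner: "av e y \<bullet> v = y \<bullet> Xe e v"
  unfolding av_def Xe_def by (simp add: inner_diff_left inner_diff_right inner_axis')

lemma norm_axis_eq: "norm (axis i (y::real^'n)) = norm y"
  by (simp add: norm_eq_sqrt_inner inner_axis_axis)

lemma av_norm: "norm (av e y) \<le> 2 * norm y"
  unfolding av_def using norm_triangle_ineq4[of "axis (tgt e) y" "axis (src e) y"]
  by (simp add: norm_axis_eq)

definition gvec :: "'v set set \<Rightarrow> ('v set \<Rightarrow> real) \<Rightarrow> real^'n^'v \<Rightarrow> real^'n^'v" where
  "gvec E dl p = (\<Sum>e\<in>E. gE dl p e *\<^sub>R av e (Xe e p))"

lemma gvec_inner: "gvec E dl p \<bullet> v = (\<Sum>e\<in>E. gE dl p e * (Xe e p \<bullet> Xe e v))"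
  unfolding gvec_def by (simp add: inner_sum_left av_inner)

lemma grad_psi: "grad (psi E dl) p = gvec E dl p"
proof -
  have d: "(psi E dl has_derivative (\<lambda>v. gvec E dl p \<bullet> v)) (at p)"
    using psi_deriv[of E dl p] by (simp add: gvec_inner)
  show ?thesis unfolding grad_def
  proof (rule the_equality)
    fix g assume "(psi E dl has_derivative (\<lambda>v. g \<bullet> v)) (at p)"
    from has_derivative_unique[OF this d] have "\<And>v. g \<bullet> v = gvec E dl p \<bullet> v" by metis
    hence "(g - gvec E dl p) \<bullet> (g - gvec E dl p) = 0" by (simp add: inner_diff_left)
    thus "g = gvec E dl p" by simp
  qed (rule d)
qed

lemma finite_E: "finite (E :: 'v::finite set set)" by simp

lemma psi_nonneg: "psi E dl p \<ge> 0"
  unfolding psi_eq by (simp add: sum_nonneg)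

lemma gE_bound:
  fixes E :: "'v::finite set set"
  assumes "e \<in> E"
  shows "\<bar>gE dl p e\<bar> \<le> 2 * sqrt (psi E dl p)"
proof -
  have "(gE dl p e)\<^sup>2 \<le> (\<Sum>e\<in>E. (gE dl p e)\<^sup>2)"
    by (rule member_le_sum) (use assms in auto)
  also have "\<dots> = 4 * psi E dl p" unfolding psi_eq by simp
  finally have "\<bar>gE dl p e\<bar> \<le> sqrt (4 * psi E dl p)"
    by (simp add: real_le_rsqrt)
  also have "\<dots> = 2 * sqrt (psi E dl p)" by (simp add: real_sqrt_mult)
  finally show ?thesis .
qed

definition LL :: "'v set set \<Rightarrow> ('v set \<Rightarrow> real) \<Rightarrow> real \<Rightarrow> real" where
  "LL E dl r = sqrt ((\<Sum>e\<in>E. (dl e)\<^sup>2) + 2 * sqrt r)"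

lemma Xe_bound:
  fixes E :: "'v::finite set set"
  assumes "e \<in> E" "psi E dl p \<le> r"
  shows "norm (Xe e p) \<le> LL E dl r"
proof -
  have g: "\<bar>gE dl p e\<bar> \<le> 2 * sqrt r"
    using gE_bound[OF assms(1), of dl p] assms(2) psi_nonneg[of E dl p]
    by (meson order_trans mult_left_mono real_sqrt_le_iff zero_le_numeral)
  have d: "(dl e)\<^sup>2 \<le> (\<Sum>e\<in>E. (dl e)\<^sup>2)"
    by (rule member_le_sum) (use assms in auto)
  have "Xe e p \<bullet> Xe e p \<le> (\<Sum>e\<in>E. (dl e)\<^sup>2) + 2 * sqrt r"
    using g d unfolding gE_def by linarith
  thus ?thesis unfolding LL_def norm_eq_sqrt_inner by (simp add: real_sqrt_le_iff)
qed

lemma LL_nonneg: "r \<ge> 0 \<Longrightarrow> LL E dl r \<ge> 0"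
  unfolding LL_def by (simp add: sum_nonneg)

lemma partA:
  fixes E :: "'v::finite set set"
  assumes "r > 0"
  shows "\<exists>c1>0. \<forall>p::real^'n^'v. psi E dl p \<le> r \<longrightarrow>
            (norm (grad (psi E dl) p))\<^sup>2 \<le> c1 * psi E dl p"
proof (intro exI[of _ "16 * (real (card E))\<^sup>2 * (LL E dl r)\<^sup>2 + 1"] conjI allI impI)
  show "0 < 16 * (real (card E))\<^sup>2 * (LL E dl r)\<^sup>2 + 1"
    by (intro add_nonneg_pos mult_nonneg_nonneg) auto
  fix p :: "real^'n^'v" assume pr: "psi E dl p \<le> r"
  let ?L = "LL E dl r" and ?s = "sqrt (psi E dl p)"
  have L0: "?L \<ge> 0" using LL_nonneg[OF less_imp_le[OF assms]] .
  have "norm (gvec E dl p) \<le> (\<Sum>e\<in>E. norm (gE dl p e *\<^sub>R av e (Xe e p)))"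
    unfolding gvec_def by (rule norm_sum)
  also have "\<dots> \<le> (\<Sum>e\<in>E. 4 * ?L * ?s)"
  proof (rule sum_mono)
    fix e assume e: "e \<in> E"
    have "norm (gE dl p e *\<^sub>R av e (Xe e p)) = \<bar>gE dl p e\<bar> * norm (av e (Xe e p))" by simp
    also have "\<dots> \<le> (2 * ?s) * (2 * ?L)"
      apply (rule mult_mono)
      using gE_bound[OF e] av_norm[of e "Xe e p"] Xe_bound[OF e pr] psi_nonneg[of E dl p] by auto
    finally show "norm (gE dl p e *\<^sub>R av e (Xe e p)) \<le> 4 * ?L * ?s" by (simp add: ac_simps)
  qed
  also have "\<dots> = real (card E) * 4 * ?L * ?s" by simp
  finally have n: "norm (gvec E dl p) \<le> real (card E) * 4 * ?L * ?s" .
  have "(norm (gvec E dl p))\<^sup>2 \<le> (real (card E) * 4 * ?L * ?s)\<^sup>2"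
    by (rule power_mono[OF n]) simp
  also have "\<dots> = 16 * (real (card E))\<^sup>2 * ?L\<^sup>2 * psi E dl p"
    using psi_nonneg[of E dl p] by (simp add: power_mult_distrib)
  also have "\<dots> \<le> (16 * (real (card E))\<^sup>2 * ?L\<^sup>2 + 1) * psi E dl p"
    using psi_nonneg[of E dl p] by (simp add: algebra_simps)
  finally show "(norm (grad (psi E dl) p))\<^sup>2 \<le> (16 * (real (card E))\<^sup>2 * ?L\<^sup>2 + 1) * psi E dl p"
    by (simp add: grad_psi)
qed

lemma Xe_has_derivative2 [derivative_intros]:
  "(f has_derivative f') F \<Longrightarrow> ((\<lambda>x. Xe e (f x)) has_derivative (\<lambda>x. Xe e (f' x))) F"
  by (rule bounded_linear.has_derivative[OF bl_Xe])

definition Bf :: "'v set \<Rightarrow> real^'n^'v \<Rightarrow> real^'n^'v \<Rightarrow> real" where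
  "Bf e u v = Xe e u \<bullet> Xe e v"

lemma Bf_deriv1 [derivative_intros]:
  "((\<lambda>q. Bf e q v) has_derivative (\<lambda>w. Bf e w v)) (at p)"
  unfolding Bf_def by (auto intro!: derivative_eq_intros)

lemma gE_deriv2 [derivative_intros]:
  "((\<lambda>q. gE dl q e) has_derivative (\<lambda>v. 2 * Bf e p v)) (at p)"
  using gE_deriv unfolding Bf_def .

lemma Bf_sym: "Bf e u v = Bf e v u" unfolding Bf_def by (simp add: inner_commute)

lemma fd_eq: "(f has_derivative f') (at p) \<Longrightarrow> frechet_derivative f (at p) v = f' v"
  using frechet_derivative_at by metis

lemma hd_step: "(\<lambda>q. higher_deriv f vs q) = g \<Longrightarrow> (g has_derivative g') (at p) \<Longrightarrow>
  higher_deriv f (v # vs) p = g' v"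
proof -
  assume a: "(\<lambda>q. higher_deriv f vs q) = g" "(g has_derivative g') (at p)"
  have "higher_deriv f (v # vs) p = frechet_derivative (\<lambda>q. higher_deriv f vs q) (at p) v"
    by (rule higher_deriv.simps(2))
  also have "\<dots> = g' v" unfolding a(1) by (rule fd_eq[OF a(2)])
  finally show ?thesis .
qed

lemma hd1: "higher_deriv (psi E dl) [v] p = (\<Sum>e\<in>E. gE dl p e * Bf e p v)"
proof (rule hd_step)
  show "(\<lambda>q. higher_deriv (psi E dl) [] q) = psi E dl" by (rule ext) (rule higher_deriv.simps(1))
  show "(psi E dl has_derivative (\<lambda>v. \<Sum>e\<in>E. gE dl p e * Bf e p v)) (at p)"
    using psi_deriv[of E dl p] by (simp add: Bf_def)
qed

lemma hd2: "higher_deriv (psi E dl) [v1, v2] p =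
   (\<Sum>e\<in>E. 2 * Bf e p v1 * Bf e p v2 + gE dl p e * Bf e v1 v2)"
proof (rule hd_step[where g'="\<lambda>v1. \<Sum>e\<in>E. 2 * Bf e p v1 * Bf e p v2 + gE dl p e * Bf e v1 v2"])
  show "(\<lambda>q. higher_deriv (psi E dl) [v2] q) = (\<lambda>q. \<Sum>e\<in>E. gE dl q e * Bf e q v2)"
    using hd1 by blast
  show "((\<lambda>q. \<Sum>e\<in>E. gE dl q e * Bf e q v2) has_derivative
     (\<lambda>v1. \<Sum>e\<in>E. 2 * Bf e p v1 * Bf e p v2 + gE dl p e * Bf e v1 v2)) (at p)"
    by (auto intro!: derivative_eq_intros ext sum.cong simp: algebra_simps)
qed

lemma hd3: "higher_deriv (psi E dl) [v1, v2, v3] p =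
   (\<Sum>e\<in>E. 2 * (Bf e v1 v2 * Bf e p v3 + Bf e p v2 * Bf e v1 v3 + Bf e p v1 * Bf e v2 v3))"
proof (rule hd_step[where g'="\<lambda>v1. \<Sum>e\<in>E. 2 * (Bf e v1 v2 * Bf e p v3 + Bf e p v2 * Bf e v1 v3 + Bf e p v1 * Bf e v2 v3)"])
  show "(\<lambda>q. higher_deriv (psi E dl) [v2, v3] q) =
     (\<lambda>q. \<Sum>e\<in>E. 2 * Bf e q v2 * Bf e q v3 + gE dl q e * Bf e v2 v3)"
    using hd2 by blast
  show "((\<lambda>q. \<Sum>e\<in>E. 2 * Bf e q v2 * Bf e q v3 + gE dl q e * Bf e v2 v3) has_derivative
     (\<lambda>v1. \<Sum>e\<in>E. 2 * (Bf e v1 v2 * Bf e p v3 + Bf e p v2 * Bf e v1 v3 + Bf e p v1 * Bf e v2 v3))) (at p)"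
    by (auto intro!: derivative_eq_intros ext sum.cong simp: algebra_simps)
qed

lemma hd4: "higher_deriv (psi E dl) [v1, v2, v3, v4] p =
   (\<Sum>e\<in>E. 2 * (Bf e v2 v3 * Bf e v1 v4 + Bf e v1 v3 * Bf e v2 v4 + Bf e v1 v2 * Bf e v3 v4))"
proof (rule hd_step[where g'="\<lambda>v1. \<Sum>e\<in>E. 2 * (Bf e v2 v3 * Bf e v1 v4 + Bf e v1 v3 * Bf e v2 v4 + Bf e v1 v2 * Bf e v3 v4)"])
  show "(\<lambda>q. higher_deriv (psi E dl) [v2, v3, v4] q) =
     (\<lambda>q. \<Sum>e\<in>E. 2 * (Bf e v2 v3 * Bf e q v4 + Bf e q v3 * Bf e v2 v4 + Bf e q v2 * Bf e v3 v4))"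
    using hd3 by blast
  show "((\<lambda>q. \<Sum>e\<in>E. 2 * (Bf e v2 v3 * Bf e q v4 + Bf e q v3 * Bf e v2 v4 + Bf e q v2 * Bf e v3 v4)) has_derivative
     (\<lambda>v1. \<Sum>e\<in>E. 2 * (Bf e v2 v3 * Bf e v1 v4 + Bf e v1 v3 * Bf e v2 v4 + Bf e v1 v2 * Bf e v3 v4))) (at p)"
    by (auto intro!: derivative_eq_intros ext sum.cong simp: algebra_simps)
qed

lemma hd5: "length vs = n + 5 \<Longrightarrow> higher_deriv (psi E dl) vs p = 0"
proof (induction n arbitrary: vs p)
  case 0
  then obtain v v1 v2 v3 v4 where vs: "vs = [v, v1, v2, v3, v4]"
    by (auto simp: numeral_eq_Suc length_Suc_conv)
  show ?case unfolding vs
  proof (rule hd_step[where g'="\<lambda>_. 0"])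
    show "(\<lambda>q. higher_deriv (psi E dl) [v1, v2, v3, v4] q) =
      (\<lambda>q. \<Sum>e\<in>E. 2 * (Bf e v2 v3 * Bf e v1 v4 + Bf e v1 v3 * Bf e v2 v4 + Bf e v1 v2 * Bf e v3 v4))"
      using hd4 by blast
  qed (rule has_derivative_const)
next
  case (Suc n)
  then obtain v ws where vs: "vs = v # ws" and "length ws = n + 5"
    by (cases vs) auto
  hence "(\<lambda>q. higher_deriv (psi E dl) ws q) = (\<lambda>q. 0)" using Suc.IH by blast
  thus ?case unfolding vs by (rule hd_step) (rule has_derivative_const)
qed

lemma abs_mult_le: "\<bar>x\<bar> \<le> a \<Longrightarrow> \<bar>y\<bar> \<le> b \<Longrightarrow> \<bar>x * y\<bar> \<le> a * (b::real)"
  by (simp add: abs_mult mult_mono')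

lemma Bf_bound: "\<bar>Bf e u v\<bar> \<le> 4 * (norm u * norm v)"
proof -
  have "\<bar>Bf e u v\<bar> \<le> norm (Xe e u) * norm (Xe e v)" unfolding Bf_def by (rule Cauchy_Schwarz_ineq2)
  also have "\<dots> \<le> (2 * norm u) * (2 * norm v)" by (rule mult_mono) (auto simp: Xe_norm)
  finally show ?thesis by simp
qed

lemma Bf_bound_p:
  fixes E :: "'v::finite set set"
  assumes "e \<in> E" "psi E dl p \<le> r"
  shows "\<bar>Bf e p v\<bar> \<le> 2 * LL E dl r * norm v"
proof -
  have L0: "LL E dl r \<ge> 0" using Xe_bound[OF assms] norm_ge_zero order_trans by blast
  have "\<bar>Bf e p v\<bar> \<le> norm (Xe e p) * norm (Xe e v)" unfolding Bf_def by (rule Cauchy_Schwarz_ineq2)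
  also have "\<dots> \<le> LL E dl r * (2 * norm v)" using L0 by (intro mult_mono) (auto simp: Xe_norm Xe_bound[OF assms])
  finally show ?thesis by simp
qed

lemma gE_bound_r:
  fixes E :: "'v::finite set set"
  assumes "e \<in> E" "psi E dl p \<le> r"
  shows "\<bar>gE dl p e\<bar> \<le> 2 * sqrt r"
  using gE_bound[OF assms(1), of dl p] assms(2) psi_nonneg[of E dl p]
  by (meson order_trans mult_left_mono real_sqrt_le_iff zero_le_numeral)

lemma sum_bound: "(\<And>e. e \<in> E \<Longrightarrow> \<bar>t e\<bar> \<le> K) \<Longrightarrow> \<bar>\<Sum>e\<in>E. t e\<bar> \<le> real (card E) * (K::real)"
proof -
  assume a: "\<And>e. e \<in> E \<Longrightarrow> \<bar>t e\<bar> \<le> K"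
  have "\<bar>\<Sum>e\<in>E. t e\<bar> \<le> (\<Sum>e\<in>E. \<bar>t e\<bar>)" by (rule sum_abs)
  also have "\<dots> \<le> (\<Sum>e\<in>E. K)" by (rule sum_mono) (rule a)
  finally show ?thesis by simp
qed

lemma partB:
  fixes E :: "'v::finite set set"
  assumes "r > 0" "l \<ge> 2"
  shows "\<exists>c2>0. \<forall>p::real^'n^'v. psi E dl p \<le> r \<longrightarrow>
            (\<forall>vs. length vs = l \<longrightarrow>
               \<bar>higher_deriv (psi E dl) vs p\<bar> \<le> c2 * prod_list (map norm vs))"
proof -
  let ?L = "LL E dl r"
  have L0: "?L \<ge> 0" using LL_nonneg[OF less_imp_le[OF assms(1)]] .
  have s0: "sqrt r \<ge> 0" using assms by simp
  let ?C = "real (card E)"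
  have "l = 2 \<or> l = 3 \<or> l = 4 \<or> l = (l - 5) + 5" using assms(2) by arith
  then consider "l = 2" | "l = 3" | "l = 4" | n where "l = n + 5" by blast
  then show ?thesis
  proof cases
    case 1
    show ?thesis
    proof (intro exI[of _ "?C * (8 * ?L\<^sup>2 + 8 * sqrt r) + 1"] conjI allI impI)
      show "0 < ?C * (8 * ?L\<^sup>2 + 8 * sqrt r) + 1" using s0 by (intro add_nonneg_pos mult_nonneg_nonneg) auto
      fix p :: "real^'n^'v" and vs :: "(real^'n^'v) list"
      assume pr: "psi E dl p \<le> r" and len: "length vs = l"
      then obtain v1 v2 where vs: "vs = [v1, v2]" using 1 by (auto simp: numeral_eq_Suc length_Suc_conv)
      let ?a = "norm v1" and ?b = "norm v2"
      have "\<bar>higher_deriv (psi E dl) vs p\<bar> \<le> ?C * ((8 * ?L\<^sup>2 + 8 * sqrt r) * (?a * ?b))"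
        unfolding vs hd2
      proof (rule sum_bound)
        fix e assume e: "e \<in> E"
        have t1: "\<bar>2 * Bf e p v1 * Bf e p v2\<bar> \<le> 2 * (2 * ?L * ?a) * (2 * ?L * ?b)"
          using abs_mult_le[OF abs_mult_le[of 2 2, OF _ Bf_bound_p[OF e pr]] Bf_bound_p[OF e pr]] by simp
        have t2: "\<bar>gE dl p e * Bf e v1 v2\<bar> \<le> (2 * sqrt r) * (4 * (?a * ?b))"
          by (rule abs_mult_le[OF gE_bound_r[OF e pr] Bf_bound])
        show "\<bar>2 * Bf e p v1 * Bf e p v2 + gE dl p e * Bf e v1 v2\<bar> \<le> (8 * ?L\<^sup>2 + 8 * sqrt r) * (?a * ?b)"
          using t1 t2 by (simp add: algebra_simps power2_eq_square)
      qed
      also have "\<dots> \<le> (?C * (8 * ?L\<^sup>2 + 8 * sqrt r) + 1) * prod_list (map norm vs)"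
        unfolding vs using s0 by (simp add: algebra_simps)
      finally show "\<bar>higher_deriv (psi E dl) vs p\<bar> \<le> (?C * (8 * ?L\<^sup>2 + 8 * sqrt r) + 1) * prod_list (map norm vs)" .
    qed
  next
    case 2
    show ?thesis
    proof (intro exI[of _ "?C * (48 * ?L) + 1"] conjI allI impI)
      show "0 < ?C * (48 * ?L) + 1" using L0 by (intro add_nonneg_pos mult_nonneg_nonneg) auto
      fix p :: "real^'n^'v" and vs :: "(real^'n^'v) list"
      assume pr: "psi E dl p \<le> r" and len: "length vs = l"
      then obtain v1 v2 v3 where vs: "vs = [v1, v2, v3]" using 2 by (auto simp: numeral_eq_Suc length_Suc_conv)
      let ?a = "norm v1" and ?b = "norm v2" and ?c = "norm v3"
      have "\<bar>higher_deriv (psi E dl) vs p\<bar> \<le> ?C * ((48 * ?L) * (?a * (?b * ?c)))"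
        unfolding vs hd3
      proof (rule sum_bound)
        fix e assume e: "e \<in> E"
        have t1: "\<bar>Bf e v1 v2 * Bf e p v3\<bar> \<le> (4 * (?a * ?b)) * (2 * ?L * ?c)"
          by (rule abs_mult_le[OF Bf_bound Bf_bound_p[OF e pr]])
        have t2: "\<bar>Bf e p v2 * Bf e v1 v3\<bar> \<le> (2 * ?L * ?b) * (4 * (?a * ?c))"
          by (rule abs_mult_le[OF Bf_bound_p[OF e pr] Bf_bound])
        have t3: "\<bar>Bf e p v1 * Bf e v2 v3\<bar> \<le> (2 * ?L * ?a) * (4 * (?b * ?c))"
          by (rule abs_mult_le[OF Bf_bound_p[OF e pr] Bf_bound])
        show "\<bar>2 * (Bf e v1 v2 * Bf e p v3 + Bf e p v2 * Bf e v1 v3 + Bf e p v1 * Bf e v2 v3)\<bar> \<le> (48 * ?L) * (?a * (?b * ?c))"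
          using t1 t2 t3 by (simp add: algebra_simps)
      qed
      also have "\<dots> \<le> (?C * (48 * ?L) + 1) * prod_list (map norm vs)"
        unfolding vs using L0 by (simp add: algebra_simps)
      finally show "\<bar>higher_deriv (psi E dl) vs p\<bar> \<le> (?C * (48 * ?L) + 1) * prod_list (map norm vs)" .
    qed
  next
    case 3
    show ?thesis
    proof (intro exI[of _ "?C * 96 + 1"] conjI allI impI)
      show "0 < ?C * 96 + 1" by (intro add_nonneg_pos mult_nonneg_nonneg) auto
      fix p :: "real^'n^'v" and vs :: "(real^'n^'v) list"
      assume pr: "psi E dl p \<le> r" and len: "length vs = l"
      then obtain v1 v2 v3 v4 where vs: "vs = [v1, v2, v3, v4]" using 3 by (auto simp: numeral_eq_Suc length_Suc_conv)
      let ?a = "norm v1" and ?b = "norm v2" and ?c = "norm v3" and ?d = "norm v4"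
      have "\<bar>higher_deriv (psi E dl) vs p\<bar> \<le> ?C * (96 * (?a * (?b * (?c * ?d))))"
        unfolding vs hd4
      proof (rule sum_bound)
        fix e assume e: "e \<in> E"
        have t1: "\<bar>Bf e v2 v3 * Bf e v1 v4\<bar> \<le> (4 * (?b * ?c)) * (4 * (?a * ?d))"
          by (rule abs_mult_le[OF Bf_bound Bf_bound])
        have t2: "\<bar>Bf e v1 v3 * Bf e v2 v4\<bar> \<le> (4 * (?a * ?c)) * (4 * (?b * ?d))"
          by (rule abs_mult_le[OF Bf_bound Bf_bound])
        have t3: "\<bar>Bf e v1 v2 * Bf e v3 v4\<bar> \<le> (4 * (?a * ?b)) * (4 * (?c * ?d))"
          by (rule abs_mult_le[OF Bf_bound Bf_bound])
        show "\<bar>2 * (Bf e v2 v3 * Bf e v1 v4 + Bf e v1 v3 * Bf e v2 v4 + Bf e v1 v2 * Bf e v3 v4)\<bar> \<le> 96 * (?a * (?b * (?c * ?d)))"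
          using t1 t2 t3 by (simp add: algebra_simps)
      qed
      also have "\<dots> \<le> (?C * 96 + 1) * prod_list (map norm vs)"
        unfolding vs by (simp add: algebra_simps)
      finally show "\<bar>higher_deriv (psi E dl) vs p\<bar> \<le> (?C * 96 + 1) * prod_list (map norm vs)" .
    qed
  next
    case 4
    show ?thesis
    proof (intro exI[of _ 1] conjI allI impI)
      fix p :: "real^'n^'v" and vs :: "(real^'n^'v) list"
      assume "length vs = l"
      hence "higher_deriv (psi E dl) vs p = 0" using hd5 4 by blast
      moreover have "prod_list (map norm vs) \<ge> 0" by (induction vs) auto
      ultimately show "\<bar>higher_deriv (psi E dl) vs p\<bar> \<le> 1 * prod_list (map norm vs)" by simp
    qed simp
  qed
qed

lemma av_add: "av e (x + y) = av e x + av e y"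
  unfolding av_def axis_def by (simp add: vec_eq_iff)
lemma av_scale: "av e (c *\<^sub>R x) = c *\<^sub>R av e x"
  unfolding av_def axis_def by (simp add: vec_eq_iff algebra_simps)
lemma bl_av: "bounded_linear (av e)"
  by (rule bounded_linear_intro[where K=2]) (auto simp: av_add av_scale av_norm mult.commute[of _ 2])
lemma av_lim [tendsto_intros]: "(f \<longlongrightarrow> l) F \<Longrightarrow> ((\<lambda>x. av e (f x)) \<longlongrightarrow> av e l) F"
  using bounded_linear.tendsto[OF bl_av] .
lemma Bf_lim [tendsto_intros]: "(f \<longlongrightarrow> l) F \<Longrightarrow> (g \<longlongrightarrow> m) F \<Longrightarrow> ((\<lambda>x. Bf e (f x) (g x)) \<longlongrightarrow> Bf e l m) F"
  unfolding Bf_def by (intro tendsto_intros Xe_lim)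

definition Lq :: "'v set set \<Rightarrow> real^'n^'v \<Rightarrow> real^('v set) \<Rightarrow> real^'n^'v" where
  "Lq E q z = (\<Sum>e\<in>E. (z $ e) *\<^sub>R av e (Xe e q))"

lemma Lq_lim: "(f \<longlongrightarrow> l) F \<Longrightarrow> (g \<longlongrightarrow> m) F \<Longrightarrow> ((\<lambda>x. Lq E (f x) (g x)) \<longlongrightarrow> Lq E l m) F"
  unfolding Lq_def by (intro tendsto_intros Xe_lim)

lemma gvec_lim: "(f \<longlongrightarrow> l) F \<Longrightarrow> ((\<lambda>x. gvec E dl (f x)) \<longlongrightarrow> gvec E dl l) F"
  unfolding gvec_def gE_def by (intro tendsto_intros Xe_lim)

lemma gE_split:
  assumes "Xe e q \<bullet> Xe e q = (dl e)\<^sup>2"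
  shows "gE dl (q + c *\<^sub>R u) e = c * (2 * Bf e q u + c * Bf e u u)"
  using assms unfolding gE_def Bf_def Xe_add Xe_scale
  by (simp add: inner_add_left inner_add_right inner_commute algebra_simps)

lemma final_contra:
  fixes E :: "'v::finite set set"
    and p q :: "nat \<Rightarrow> real^'n^'v" and y :: "nat \<Rightarrow> real^('v set)"
  assumes pl: "p \<longlonglongrightarrow> qs" and ql: "q \<longlonglongrightarrow> qs" and yl: "y \<longlonglongrightarrow> ys"
    and qr: "\<And>k e. e \<in> E \<Longrightarrow> Xe e (q k) \<bullet> Xe e (q k) = (dl e)\<^sup>2"
    and wnz: "\<And>k. p k \<noteq> q k"
    and rep: "\<And>k. (1 / norm (p k - q k)) *\<^sub>R (p k - q k) = Lq E (q k) (y k)"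
    and epsl: "eps \<longlonglongrightarrow> 0"
    and ineq: "\<And>k. (norm (gvec E dl (p k)))\<^sup>2 \<le> eps k * psi E dl (p k)"
  shows False
proof -
  define nw where "nw k = norm (p k - q k)" for k
  define u where "u k = (1 / nw k) *\<^sub>R (p k - q k)" for k
  define us where "us = Lq E qs ys"
  have nw0: "nw k > 0" for k using wnz[of k] unfolding nw_def by simp
  have pk: "p k = q k + nw k *\<^sub>R u k" for k
    using nw0[of k] unfolding u_def by simp
  have nu: "norm (u k) = 1" for k using nw0[of k] unfolding u_def nw_def by simp
  have ul: "u \<longlonglongrightarrow> us"
    unfolding us_def u_def nw_def using rep Lq_lim[OF ql yl] by simp
  have nus: "norm us = 1"
    using tendsto_norm[OF ul] nu by (simp add: LIMSEQ_const_iff)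
  have nwl: "nw \<longlonglongrightarrow> 0"
    unfolding nw_def using tendsto_norm[OF tendsto_diff[OF pl ql]] by simp
  define h where "h k e = 2 * Bf e (q k) (u k) + nw k * Bf e (u k) (u k)" for k e
  have gh: "gE dl (p k) e = nw k * h k e" if "e \<in> E" for k e
  proof -
    have "gE dl (p k) e = gE dl (q k + nw k *\<^sub>R u k) e" using pk[of k] by simp
    also have "\<dots> = nw k * h k e" unfolding h_def by (rule gE_split) (rule qr[OF that])
    finally show ?thesis .
  qed
  have hl: "(\<lambda>k. h k e) \<longlonglongrightarrow> 2 * Bf e qs us" for e
  proof -
    have "(\<lambda>k. h k e) \<longlonglongrightarrow> 2 * Bf e qs us + 0 * Bf e us us"
      unfolding h_def by (intro tendsto_intros ql ul nwl)
    thus ?thesis by simp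
  qed
  define G where "G = (\<Sum>e\<in>E. (2 * Bf e qs us) *\<^sub>R av e (Xe e qs))"
  have gv: "(1 / nw k) *\<^sub>R gvec E dl (p k) = (\<Sum>e\<in>E. h k e *\<^sub>R av e (Xe e (p k)))" for k
    unfolding gvec_def scaleR_sum_right using nw0[of k] by (intro sum.cong) (auto simp: gh)
  have Gl: "(\<lambda>k. (1 / nw k) *\<^sub>R gvec E dl (p k)) \<longlonglongrightarrow> G"
    unfolding gv G_def by (intro tendsto_intros hl Xe_lim pl)
  have ps: "psi E dl (p k) = (nw k)\<^sup>2 * ((1/4) * (\<Sum>e\<in>E. (h k e)\<^sup>2))" for k
    unfolding psi_eq by (simp add: gh power_mult_distrib sum_distrib_left algebra_simps)
  have le: "(norm ((1 / nw k) *\<^sub>R gvec E dl (p k)))\<^sup>2 \<le> eps k * ((1/4) * (\<Sum>e\<in>E. (h k e)\<^sup>2))" for k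
  proof -
    have "(norm ((1 / nw k) *\<^sub>R gvec E dl (p k)))\<^sup>2 = (norm (gvec E dl (p k)))\<^sup>2 / (nw k)\<^sup>2"
      using nw0[of k] by (simp add: power_divide)
    also have "\<dots> \<le> eps k * psi E dl (p k) / (nw k)\<^sup>2"
      by (rule divide_right_mono[OF ineq]) simp
    also have "\<dots> = eps k * ((1/4) * (\<Sum>e\<in>E. (h k e)\<^sup>2))"
      unfolding ps using nw0[of k] by simp
    finally show ?thesis .
  qed
  have rl: "(\<lambda>k. eps k * ((1/4) * (\<Sum>e\<in>E. (h k e)\<^sup>2))) \<longlonglongrightarrow> 0 * ((1/4) * (\<Sum>e\<in>E. (2 * Bf e qs us)\<^sup>2))"
    by (intro tendsto_intros epsl hl)
  have "(norm G)\<^sup>2 \<le> 0 * ((1/4) * (\<Sum>e\<in>E. (2 * Bf e qs us)\<^sup>2))"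
    by (rule tendsto_le[OF trivial_limit_sequentially rl tendsto_power[OF tendsto_norm[OF Gl], of 2]])
      (rule always_eventually, rule allI, rule le)
  hence G0: "G = 0" by simp
  have "G \<bullet> us = (\<Sum>e\<in>E. 2 * (Bf e qs us)\<^sup>2)"
    unfolding G_def inner_sum_left by (simp add: av_inner Bf_def power2_eq_square mult.assoc)
  hence "(\<Sum>e\<in>E. (Bf e qs us)\<^sup>2) = 0" using G0 by (simp add: sum_distrib_left[symmetric])
  hence B0: "\<forall>e\<in>E. Bf e qs us = 0" by (simp add: sum_nonneg_eq_0_iff)
  have "Lq E qs ys \<bullet> us = (\<Sum>e\<in>E. ys $ e * Bf e qs us)"
    by (simp add: Lq_def inner_sum_left av_inner Bf_def)
  hence "us \<bullet> us = (\<Sum>e\<in>E. ys $ e * Bf e qs us)" by (simp only: us_def[symmetric])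
  also have "\<dots> = 0" using B0 by simp
  finally show False using nus by simp
qed

lemma first_order:
  fixes p q :: "'a::real_inner"
  assumes qS: "q \<in> S" and mn: "\<forall>y\<in>S. dist p q \<le> dist p y" and v: "v \<in> tangent_space S q"
  shows "(p - q) \<bullet> v = 0"
proof -
  obtain \<gamma> \<epsilon> where e: "\<epsilon> > 0" and g0: "\<gamma> 0 = q" and gS: "\<forall>t\<in>ball 0 \<epsilon>. \<gamma> t \<in> S"
    and gd: "(\<gamma> has_vector_derivative v) (at 0)"
    using v unfolding tangent_space_def by blast
  have gd': "(\<gamma> has_derivative (\<lambda>x. x *\<^sub>R v)) (at 0)" using gd unfolding has_vector_derivative_def .
  define \<phi> where "\<phi> t = (p - \<gamma> t) \<bullet> (p - \<gamma> t)" for t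
  have pd: "(\<phi> has_derivative (\<lambda>h. - (h *\<^sub>R v) \<bullet> (p - \<gamma> 0) + (p - \<gamma> 0) \<bullet> (- (h *\<^sub>R v)))) (at 0)"
    unfolding \<phi>_def[abs_def] by (auto intro!: derivative_eq_intros gd')
  have ev: "eventually (\<lambda>y. \<phi> 0 \<le> \<phi> y) (at 0)"
    unfolding eventually_at
  proof (intro exI[of _ \<epsilon>] conjI allI impI ballI)
    fix t :: real assume "t \<noteq> 0 \<and> dist t 0 < \<epsilon>"
    hence "\<gamma> t \<in> S" using gS by (auto simp: dist_commute)
    hence "dist p q \<le> dist p (\<gamma> t)" using mn by blast
    hence "(dist p q)\<^sup>2 \<le> (dist p (\<gamma> t))\<^sup>2" by (simp add: power_mono)
    thus "\<phi> 0 \<le> \<phi> t" unfolding \<phi>_def g0 dist_norm power2_norm_eq_inner .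
  qed (use e in auto)
  from has_derivative_local_min[OF pd ev]
  have "(\<lambda>h. - (h *\<^sub>R v) \<bullet> (p - \<gamma> 0) + (p - \<gamma> 0) \<bullet> (- (h *\<^sub>R v))) 1 = 0" by metis
  thus ?thesis using g0 by (simp add: inner_commute)
qed

lemma ker_Df_eq: "ker_Df E q = {v. \<forall>e\<in>E. Bf e q v = 0}"
proof -
  have "frechet_derivative (\<lambda>q. edge_sqlen q e) (at q) v = 2 * Bf e q v" for e v
  proof -
    have "((\<lambda>q. Xe e q \<bullet> Xe e q) has_derivative (\<lambda>v. 2 * Bf e q v)) (at q)"
      unfolding Bf_def by (auto intro!: derivative_eq_intros simp: inner_commute)
    thus ?thesis unfolding edge_sqlen_Xe by (rule fd_eq)
  qed
  thus ?thesis unfolding ker_Df_def by auto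
qed

lemma Lq_add: "Lq E q (z1 + z2) = Lq E q z1 + Lq E q z2"
  unfolding Lq_def by (simp add: scaleR_add_left sum.distrib)
lemma Lq_scale: "Lq E q (c *\<^sub>R z) = c *\<^sub>R Lq E q z"
  unfolding Lq_def by (simp add: scaleR_sum_right)
lemma Lq_zero: "Lq E q 0 = 0"
  unfolding Lq_def by simp
lemma Lq_axis:
  fixes E :: "'v::finite set set"
  assumes "e \<in> E" shows "Lq E q (axis e 1) = av e (Xe e q)"
proof -
  have "Lq E q (axis e 1) = (\<Sum>e'\<in>E. (if e' = e then av e' (Xe e' q) else 0))"
    unfolding Lq_def axis_def by (intro sum.cong) auto
  also have "\<dots> = av e (Xe e q)" using assms by (simp add: sum.delta')
  finally show ?thesis .
qed

lemma perp_range: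
  fixes E :: "'v::finite set set"
  assumes "\<forall>v. (\<forall>e\<in>E. Bf e q v = 0) \<longrightarrow> w \<bullet> v = 0"
  shows "\<exists>z. w = Lq E q z"
proof -
  let ?T = "(\<lambda>e. av e (Xe e q)) ` E"
  obtain y z where y: "y \<in> span ?T" and z: "\<And>x. x \<in> span ?T \<Longrightarrow> orthogonal z x" and w: "w = y + z"
    by (rule orthogonal_subspace_decomp_exists[of ?T w]) blast
  have "\<forall>e\<in>E. Bf e q z = 0"
  proof
    fix e assume "e \<in> E"
    hence "av e (Xe e q) \<in> span ?T" by (intro span_base) auto
    hence "z \<bullet> av e (Xe e q) = 0" using z unfolding orthogonal_def by blast
    hence "av e (Xe e q) \<bullet> z = 0" by (simp only: inner_commute)
    thus "Bf e q z = 0" by (simp only: av_inner Bf_def)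
  qed
  hence wz: "w \<bullet> z = 0" using assms by blast
  have yz: "y \<bullet> z = 0" using z[OF y] unfolding orthogonal_def by (simp add: inner_commute)
  have "z \<bullet> z = 0" using wz yz unfolding w by (simp add: inner_add_left)
  hence "w = y" using w by simp
  moreover have "span ?T \<subseteq> range (Lq E q)"
  proof (rule span_minimal)
    show "?T \<subseteq> range (Lq E q)"
    proof
      fix x assume "x \<in> ?T"
      then obtain e where "e \<in> E" "x = av e (Xe e q)" by blast
      thus "x \<in> range (Lq E q)" using Lq_axis[of e E q] by (metis rangeI)
    qed
    show "subspace (range (Lq E q))"
    proof (rule subspaceI)
      show "0 \<in> range (Lq E q)" using Lq_zero[of E q] by (metis rangeI)
      fix x y assume "x \<in> range (Lq E q)" "y \<in> range (Lq E q)"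
      then obtain a b where "x = Lq E q a" "y = Lq E q b" by blast
      thus "x + y \<in> range (Lq E q)" using Lq_add[of E q a b] by (metis rangeI)
    next
      fix c x assume "x \<in> range (Lq E q)"
      then obtain a where "x = Lq E q a" by blast
      thus "c *\<^sub>R x \<in> range (Lq E q)" using Lq_scale[of E q c a] by (metis rangeI)
    qed
  qed
  ultimately show ?thesis using y by blast
qed

lemma av_av: "av e x \<bullet> av e' y = ((if tgt e = tgt e' then 1 else 0) - (if tgt e = src e' then 1 else 0)
   - (if src e = tgt e' then 1 else 0) + (if src e = src e' then 1 else 0)) * (x \<bullet> y)"
  unfolding av_def by (simp add: inner_diff_left inner_diff_right inner_axis_axis algebra_simps)

lemma polar: "(a - b) \<bullet> (c - d) = ((norm (a - d))\<^sup>2 + (norm (b - c))\<^sup>2 - (norm (a - c))\<^sup>2 - (norm (b - d))\<^sup>2) / 2"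
  for a b c d :: "'a::real_inner"
  by (simp add: power2_norm_eq_inner inner_diff_left inner_diff_right inner_commute algebra_simps)

lemma Xe_Xe_inv:
  fixes q q' :: "real^'n^'v"
  assumes "\<forall>i j. norm (q' $ j - q' $ i) = norm (q $ j - q $ i)"
  shows "Xe e q' \<bullet> Xe e' q' = Xe e q \<bullet> Xe e' q"
  unfolding Xe_def polar using assms by simp

lemma Lq_norm_inv:
  fixes q q' :: "real^'n^'v"
  assumes "\<forall>i j. norm (q' $ j - q' $ i) = norm (q $ j - q $ i)"
  shows "norm (Lq E q' z) = norm (Lq E q z)"
proof -
  have "Lq E q' z \<bullet> Lq E q' z = Lq E q z \<bullet> Lq E q z"
    unfolding Lq_def inner_sum_left inner_sum_right
    by (intro sum.cong refl) (simp add: av_av Xe_Xe_inv[OF assms])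
  thus ?thesis by (simp add: norm_eq_sqrt_inner)
qed

lemma linear_Lq: "linear (Lq E q)"
  by (rule linearI) (simp_all add: Lq_add Lq_scale)

lemma rep_bound:
  fixes qs :: "real^'n^'v" and E :: "'v::finite set set"
  obtains K where "K > 0" and
    "\<And>(q::real^'n^'v) z. \<forall>i j. norm (q $ j - q $ i) = norm (qs $ j - qs $ i) \<Longrightarrow>
        \<exists>z'. Lq E q z' = Lq E q z \<and> norm z' \<le> K * norm (Lq E q z)"
proof -
  define Z where "Z = {z. Lq E qs z = 0}"
  define W where "W = {z. \<forall>y\<in>Z. y \<bullet> z = 0}"
  have subZ: "subspace Z" unfolding Z_def
    by (rule subspaceI) (auto simp: Lq_add Lq_scale Lq_zero)
  have subW: "subspace W" unfolding W_def
    by (rule subspaceI) (auto simp: inner_add_right)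
  have clW: "closed W"
  proof -
    have "W = (\<Inter>y\<in>Z. {z. y \<bullet> z = 0})" unfolding W_def by auto
    thus ?thesis by (auto intro!: closed_INT closed_hyperplane)
  qed
  have bl: "bounded_linear (Lq E qs)" using linear_Lq linear_conv_bounded_linear by blast
  have inj: "\<forall>x\<in>W. Lq E qs x = 0 \<longrightarrow> x = 0"
  proof (intro ballI impI)
    fix x assume "x \<in> W" "Lq E qs x = 0"
    hence "x \<bullet> x = 0" unfolding W_def Z_def by auto
    thus "x = 0" by simp
  qed
  obtain e where e: "e > 0" and eb: "\<forall>x\<in>W. norm (Lq E qs x) \<ge> e * norm x"
    using injective_imp_isometric[OF clW subW bl inj] by blast
  show ?thesis
  proof (rule that[of "1 / e"])
    show "1 / e > 0" using e by simp
    fix q :: "real^'n^'v" and z assume cq: "\<forall>i j. norm (q $ j - q $ i) = norm (qs $ j - qs $ i)"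
    obtain y z1 where y: "y \<in> span Z" and z1: "\<And>x. x \<in> span Z \<Longrightarrow> orthogonal z1 x" and zz: "z = y + z1"
      by (rule orthogonal_subspace_decomp_exists[of Z z]) blast
    have sZ: "span Z = Z" using subZ by (rule span_eq_iff[THEN iffD2])
    have yZ: "y \<in> Z" using y unfolding sZ .
    have z1W: "z1 \<in> W" unfolding W_def
    proof (intro CollectI ballI)
      fix x assume "x \<in> Z"
      hence "orthogonal z1 x" using z1 unfolding sZ by blast
      thus "x \<bullet> z1 = 0" unfolding orthogonal_def by (simp add: inner_commute)
    qed
    have "norm (Lq E q y) = 0" using Lq_norm_inv[OF cq, of E y] yZ unfolding Z_def by simp
    hence "Lq E q y = 0" by simp
    hence eq: "Lq E q z1 = Lq E q z" unfolding zz Lq_add by simp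
    have "e * norm z1 \<le> norm (Lq E qs z1)" using eb z1W by blast
    also have "\<dots> = norm (Lq E q z1)" using Lq_norm_inv[OF cq, of E z1] by simp
    finally have "norm z1 \<le> (1 / e) * norm (Lq E q z)" using e eq
      by (simp add: field_simps)
    thus "\<exists>z'. Lq E q z' = Lq E q z \<and> norm z' \<le> 1 / e * norm (Lq E q z)" using eq by blast
  qed
qed

lemma psi_gvec_cong:
  assumes "\<forall>e\<in>E. Xe e p' = Xe e p"
  shows "psi E dl p' = psi E dl p" "gvec E dl p' = gvec E dl p"
  using assms unfolding psi_eq gvec_def gE_def by (auto intro!: sum.cong)

lemma norm_vec_le_sum: "norm (x :: real^'n^'v) \<le> (\<Sum>i\<in>UNIV. norm (x $ i))"
  unfolding norm_vec_def by (rule L2_set_le_sum) simp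

lemma path_bound:
  fixes E :: "'v::finite set set" and p :: "real^'n^'v"
  assumes L: "\<forall>e\<in>E. norm (Xe e p) \<le> L"
    and R: "R = {(a,b). \<exists>e\<in>E. (a = src e \<and> b = tgt e) \<or> (a = tgt e \<and> b = src e)}"
  shows "(a, b) \<in> R ^^ n \<Longrightarrow> norm (p $ b - p $ a) \<le> real n * L"
proof (induction n arbitrary: b)
  case 0 thus ?case by simp
next
  case (Suc n)
  from Suc.prems obtain c where ac: "(a, c) \<in> R ^^ n" and cb: "(c, b) \<in> R" by (rule relpow_Suc_E)
  have "norm (p $ b - p $ c) \<le> L"
  proof -
    from cb R obtain e where e: "e \<in> E" and "(c = src e \<and> b = tgt e) \<or> (c = tgt e \<and> b = src e)" by blast
    hence "norm (p $ b - p $ c) = norm (Xe e p)" unfolding Xe_def by (auto simp: norm_minus_commute)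
    thus ?thesis using L e by simp
  qed
  moreover have "norm (p $ b - p $ a) \<le> norm (p $ b - p $ c) + norm (p $ c - p $ a)"
    by (rule order_trans[OF _ norm_triangle_ineq]) simp
  ultimately show ?case using Suc.IH[OF ac] by (simp add: algebra_simps)
qed

lemma normalize:
  fixes E :: "'v::finite set set" and dl
  assumes G: "is_graph E"
  obtains Bd where "\<And>p::real^'n^'v. psi E dl p \<le> 1 \<Longrightarrow>
     \<exists>p'. psi E dl p' = psi E dl p \<and> gvec E dl p' = gvec E dl p \<and> norm p' \<le> Bd"
proof -
  define R where "R = {(a::'v,b). \<exists>e\<in>E. (a = src e \<and> b = tgt e) \<or> (a = tgt e \<and> b = src e)}"
  define rep where "rep i = (SOME j. (i, j) \<in> R\<^sup>*)" for i
  have rep_in: "(i, rep i) \<in> R\<^sup>*" for i unfolding rep_def by (rule someI[of _ i]) simp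
  have rep_edge: "rep (src e) = rep (tgt e)" if e: "e \<in> E" for e
  proof -
    have st: "(src e, tgt e) \<in> R" "(tgt e, src e) \<in> R" unfolding R_def using e by auto
    have "(\<lambda>j. (src e, j) \<in> R\<^sup>*) = (\<lambda>j. (tgt e, j) \<in> R\<^sup>*)"
    proof (rule ext, rule iffI)
      fix j assume "(src e, j) \<in> R\<^sup>*" thus "(tgt e, j) \<in> R\<^sup>*" using st(2) by (rule converse_rtrancl_into_rtrancl[rotated])
    next
      fix j assume "(tgt e, j) \<in> R\<^sup>*" thus "(src e, j) \<in> R\<^sup>*" using st(1) by (rule converse_rtrancl_into_rtrancl[rotated])
    qed
    thus ?thesis unfolding rep_def by simp
  qed
  define nn where "nn i = (SOME n. (i, rep i) \<in> R ^^ n)" for i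
  have nn: "(i, rep i) \<in> R ^^ nn i" for i
    unfolding nn_def using rep_in[of i] rtrancl_power by (metis someI_ex)
  define K where "K = (\<Sum>i\<in>(UNIV::'v set). real (nn i))"
  define L where "L = LL E dl 1"
  show ?thesis
  proof (rule that[of "real CARD('v) * (K * L)"])
    fix p :: "real^'n^'v" assume p1: "psi E dl p \<le> 1"
    define p' where "p' = (\<chi> i. p $ i - p $ rep i)"
    have X: "\<forall>e\<in>E. Xe e p' = Xe e p"
      unfolding Xe_def p'_def using rep_edge by simp
    have Lb: "\<forall>e\<in>E. norm (Xe e p) \<le> L" unfolding L_def using Xe_bound p1 by blast
    have L0: "L \<ge> 0" unfolding L_def by (rule LL_nonneg) simp
    have "norm (p' $ i) \<le> K * L" for i
    proof -
      have "norm (p' $ i) = norm (p $ rep i - p $ i)" unfolding p'_def by (simp add: norm_minus_commute)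
      also have "\<dots> \<le> real (nn i) * L" by (rule path_bound[OF Lb R_def nn])
      also have "\<dots> \<le> K * L" unfolding K_def
        by (intro mult_right_mono L0 member_le_sum) auto
      finally show ?thesis .
    qed
    hence "norm p' \<le> (\<Sum>i\<in>(UNIV::'v set). K * L)"
      using norm_vec_le_sum[of p'] sum_mono[of UNIV "\<lambda>i. norm (p' $ i)" "\<lambda>i. K * L"] by simp
    hence "norm p' \<le> real CARD('v) * (K * L)" by simp
    thus "\<exists>p'. psi E dl p' = psi E dl p \<and> gvec E dl p' = gvec E dl p \<and> norm p' \<le> real CARD('v) * (K * L)"
      using psi_gvec_cong[OF X] by blast
  qed
qed

lemma psi_lim: "(f \<longlongrightarrow> l) F \<Longrightarrow> ((\<lambda>x. psi E dl (f x)) \<longlongrightarrow> psi E dl l) F"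
  unfolding psi_eq gE_def by (intro tendsto_intros Xe_lim)

lemma cong_norms:
  assumes "q \<in> congruent_configs qs"
  shows "\<forall>i j. norm (q $ j - q $ i) = norm (qs $ j - qs $ i)"
proof (intro allI)
  fix i j
  show "norm (q $ j - q $ i) = norm (qs $ j - qs $ i)"
  proof (cases "i = j")
    case False
    hence "(norm (q $ j - q $ i))\<^sup>2 = (norm (qs $ j - qs $ i))\<^sup>2"
      using assms unfolding congruent_configs_def by blast
    thus ?thesis by (simp add: power2_eq_iff_nonneg)
  qed simp
qed

lemma closed_cong: "closed (congruent_configs (qs :: real^'n^'v))"
proof -
  have "congruent_configs qs = (\<Inter>i. \<Inter>j. {q. i \<noteq> j \<longrightarrow> (norm (q $ j - q $ i))\<^sup>2 = (norm (qs $ j - qs $ i))\<^sup>2})"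
    unfolding congruent_configs_def by auto
  also have "closed \<dots>"
  proof (intro closed_INT ballI)
    fix i j :: 'v
    show "closed {q :: real^'n^'v. i \<noteq> j \<longrightarrow> (norm (q $ j - q $ i))\<^sup>2 = (norm (qs $ j - qs $ i))\<^sup>2}"
    proof (cases "i = j")
      case False
      have "closed {q :: real^'n^'v. (norm (q $ j - q $ i))\<^sup>2 = (norm (qs $ j - qs $ i))\<^sup>2}"
        by (intro closed_Collect_eq continuous_intros)
      thus ?thesis using False by simp
    qed simp
  qed
  finally show ?thesis .
qed



lemma partC:
  fixes E :: "'v::finite set set" and dl
  assumes G: "is_graph E"
    and H: "\<forall>p::real^'n^'v. p \<in> realizations E dl \<longrightarrow> inf_rigid E p"
  shows "\<exists>r>0. \<exists>c3>0. \<forall>p::real^'n^'v. psi E dl p \<le> r \<longrightarrow>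
               (norm (grad (psi E dl) p))\<^sup>2 \<ge> c3 * psi E dl p"
proof (rule ccontr)
  assume nc: "\<not> ?thesis"
  obtain Bd where Bd: "\<And>p::real^'n^'v. psi E dl p \<le> 1 \<Longrightarrow>
     \<exists>p'. psi E dl p' = psi E dl p \<and> gvec E dl p' = gvec E dl p \<and> norm p' \<le> Bd"
    by (rule normalize[OF G, of dl]) iprover
  have "\<forall>k::nat. \<exists>p::real^'n^'v. psi E dl p \<le> inverse (real (Suc k)) \<and>
      (norm (gvec E dl p))\<^sup>2 < inverse (real (Suc k)) * psi E dl p \<and> norm p \<le> Bd"
  proof
    fix k :: nat
    let ?e = "inverse (real (Suc k))"
    have e0: "?e > 0" by simp
    from nc have "\<not> (\<exists>c3>0. \<forall>p::real^'n^'v. psi E dl p \<le> ?e \<longrightarrow> c3 * psi E dl p \<le> (norm (grad (psi E dl) p))\<^sup>2)"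
      using e0 by blast
    hence "\<not> (\<forall>p::real^'n^'v. psi E dl p \<le> ?e \<longrightarrow> ?e * psi E dl p \<le> (norm (grad (psi E dl) p))\<^sup>2)"
      using e0 by blast
    then obtain p0 :: "real^'n^'v" where p0: "psi E dl p0 \<le> ?e"
      "\<not> (?e * psi E dl p0 \<le> (norm (grad (psi E dl) p0))\<^sup>2)" by blast
    have "?e \<le> 1" by (simp add: inverse_le_1_iff)
    then obtain p' where pp: "psi E dl p' = psi E dl p0" "gvec E dl p' = gvec E dl p0" "norm p' \<le> Bd"
      using Bd[of p0] p0(1) by force
    have "psi E dl p' \<le> ?e \<and> (norm (gvec E dl p'))\<^sup>2 < ?e * psi E dl p' \<and> norm p' \<le> Bd"
      using p0 pp unfolding grad_psi by (simp add: not_le)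
    thus "\<exists>p::real^'n^'v. psi E dl p \<le> ?e \<and> (norm (gvec E dl p))\<^sup>2 < ?e * psi E dl p \<and> norm p \<le> Bd"
      by blast
  qed
  hence "\<exists>P. \<forall>k::nat. psi E dl ((P k)::real^'n^'v) \<le> inverse (real (Suc k)) \<and>
      (norm (gvec E dl (P k)))\<^sup>2 < inverse (real (Suc k)) * psi E dl (P k) \<and> norm (P k) \<le> Bd"
    by (rule choice)
  then obtain P :: "nat \<Rightarrow> real^'n^'v" where
    PP: "\<forall>k::nat. psi E dl (P k) \<le> inverse (real (Suc k)) \<and>
      (norm (gvec E dl (P k)))\<^sup>2 < inverse (real (Suc k)) * psi E dl (P k) \<and> norm (P k) \<le> Bd"
    by blast
  have P1: "\<And>k. psi E dl (P k) \<le> inverse (real (Suc k))" using PP by blast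
  have P2: "\<And>k. (norm (gvec E dl (P k)))\<^sup>2 < inverse (real (Suc k)) * psi E dl (P k)" using PP by blast
  have P3: "\<And>k. norm (P k) \<le> Bd" using PP by blast
  have "bounded (range P)" using P3 by (auto simp: bounded_iff)
  then obtain qs \<sigma> where \<sigma>: "strict_mono \<sigma>" and Pl: "(P \<circ> \<sigma>) \<longlonglongrightarrow> qs"
    using bounded_imp_convergent_subsequence unfolding o_def by metis
  define p where "p k = P (\<sigma> k)" for k
  define eps where "eps k = inverse (real (Suc (\<sigma> k)))" for k
  have pl: "p \<longlonglongrightarrow> qs" using Pl unfolding p_def comp_def .
  have epsl: "eps \<longlonglongrightarrow> 0"
    using LIMSEQ_subseq_LIMSEQ[OF LIMSEQ_inverse_real_of_nat \<sigma>] unfolding eps_def comp_def .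
  have pe: "psi E dl (p k) \<le> eps k" for k unfolding p_def eps_def by (rule P1)
  have ineq: "(norm (gvec E dl (p k)))\<^sup>2 < eps k * psi E dl (p k)" for k unfolding p_def eps_def by (rule P2)
  have ppos: "psi E dl (p k) > 0" for k
  proof -
    have "0 < eps k * psi E dl (p k)" using ineq[of k] by (rule le_less_trans[OF zero_le_power2])
    thus ?thesis using psi_nonneg[of E dl "p k"] by (simp add: zero_less_mult_iff eps_def)
  qed
  have "psi E dl qs \<le> 0"
    by (rule tendsto_le[OF trivial_limit_sequentially epsl psi_lim[OF pl]]) (simp add: pe)
  hence psq: "psi E dl qs = 0" using psi_nonneg[of E dl qs] by simp
  have gq: "\<forall>e\<in>E. gE dl qs e = 0"
    using psq unfolding psi_eq by (simp add: sum_nonneg_eq_0_iff)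
  define Oc where "Oc = congruent_configs qs"
  have qsO: "qs \<in> Oc" unfolding Oc_def congruent_configs_def by simp
  have clO: "closed Oc" unfolding Oc_def by (rule closed_cong)
  have Oreal: "Xe e q \<bullet> Xe e q = (dl e)\<^sup>2" if "q \<in> Oc" "e \<in> E" for q e
  proof -
    have "Xe e q \<bullet> Xe e q = Xe e qs \<bullet> Xe e qs"
      by (rule Xe_Xe_inv) (use cong_norms that(1) in \<open>auto simp: Oc_def\<close>)
    thus ?thesis using gq that(2) unfolding gE_def by simp
  qed
  have Onz: "Oc \<noteq> {}" using qsO by blast
  have "\<forall>k. \<exists>q. q \<in> Oc \<and> (\<forall>y\<in>Oc. dist (p k) q \<le> dist (p k) y)"
  proof
    fix k
    obtain q where "q \<in> Oc" "\<And>y. y \<in> Oc \<Longrightarrow> dist (p k) q \<le> dist (p k) y"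
      by (rule distance_attains_inf[OF clO Onz, of "p k"]) iprover
    thus "\<exists>q. q \<in> Oc \<and> (\<forall>y\<in>Oc. dist (p k) q \<le> dist (p k) y)" by blast
  qed
  hence "\<exists>Q. \<forall>k. Q k \<in> Oc \<and> (\<forall>y\<in>Oc. dist (p k) (Q k) \<le> dist (p k) y)" by (rule choice)
  then obtain Q where QQ: "\<forall>k. Q k \<in> Oc \<and> (\<forall>y\<in>Oc. dist (p k) (Q k) \<le> dist (p k) y)" by blast
  have QO: "\<And>k. Q k \<in> Oc" using QQ by blast
  have Qmin: "\<And>k. \<forall>y\<in>Oc. dist (p k) (Q k) \<le> dist (p k) y" using QQ by blast
  obtain K where K0: "K > 0" and Kb: "\<And>(q::real^'n^'v) z. \<forall>i j. norm (q $ j - q $ i) = norm (qs $ j - qs $ i) \<Longrightarrow>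
        \<exists>z'. Lq E q z' = Lq E q z \<and> norm z' \<le> K * norm (Lq E q z)"
    by (rule rep_bound[of qs E]) iprover
  have pQ: "p k \<noteq> Q k" for k
  proof
    assume "p k = Q k"
    hence "psi E dl (p k) = 0" using Oreal[OF QO[of k]] unfolding psi_eq gE_def by simp
    thus False using ppos[of k] by simp
  qed
  have "\<forall>k. \<exists>y. (1 / norm (p k - Q k)) *\<^sub>R (p k - Q k) = Lq E (Q k) y \<and> norm y \<le> K"
  proof
    fix k
    have cn: "\<forall>i j. norm (Q k $ j - Q k $ i) = norm (qs $ j - qs $ i)"
      using cong_norms QO[of k] unfolding Oc_def by blast
    have cO: "congruent_configs (Q k) = Oc"
      using cn unfolding Oc_def congruent_configs_def by simp
    have "Q k \<in> realizations E dl"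
      unfolding realizations_def edge_sqlen_Xe using Oreal[OF QO[of k]] by blast
    hence "inf_rigid E (Q k)" using H by blast
    hence ts: "tangent_space Oc (Q k) = {v. \<forall>e\<in>E. Bf e (Q k) v = 0}"
      unfolding inf_rigid_def cO ker_Df_eq .
    have "\<forall>v. (\<forall>e\<in>E. Bf e (Q k) v = 0) \<longrightarrow> (p k - Q k) \<bullet> v = 0"
    proof (intro allI impI)
      fix v assume "\<forall>e\<in>E. Bf e (Q k) v = 0"
      hence "v \<in> tangent_space Oc (Q k)" unfolding ts by blast
      thus "(p k - Q k) \<bullet> v = 0" by (rule first_order[OF QO Qmin])
    qed
    then obtain z where "p k - Q k = Lq E (Q k) z" using perp_range by blast
    hence eqz: "(1 / norm (p k - Q k)) *\<^sub>R (p k - Q k) = Lq E (Q k) ((1 / norm (p k - Q k)) *\<^sub>R z)"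
      by (simp add: Lq_scale)
    obtain y where y1': "Lq E (Q k) y = Lq E (Q k) ((1 / norm (p k - Q k)) *\<^sub>R z)"
      and y2': "norm y \<le> K * norm (Lq E (Q k) ((1 / norm (p k - Q k)) *\<^sub>R z))"
      using Kb[OF cn, of "(1 / norm (p k - Q k)) *\<^sub>R z"] by blast
    have y1: "(1 / norm (p k - Q k)) *\<^sub>R (p k - Q k) = Lq E (Q k) y" using y1' eqz by simp
    have y2: "norm y \<le> K * norm ((1 / norm (p k - Q k)) *\<^sub>R (p k - Q k))"
      using y2' eqz by simp
    have "norm ((1 / norm (p k - Q k)) *\<^sub>R (p k - Q k)) = 1" using pQ[of k] by simp
    thus "\<exists>y. (1 / norm (p k - Q k)) *\<^sub>R (p k - Q k) = Lq E (Q k) y \<and> norm y \<le> K"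
      using y1 y2 by auto
  qed
  hence "\<exists>Y. \<forall>k. (1 / norm (p k - Q k)) *\<^sub>R (p k - Q k) = Lq E (Q k) (Y k) \<and> norm (Y k) \<le> K"
    by (rule choice)
  then obtain Y where YY: "\<forall>k. (1 / norm (p k - Q k)) *\<^sub>R (p k - Q k) = Lq E (Q k) (Y k) \<and> norm (Y k) \<le> K"
    by blast
  have Y1: "\<And>k. (1 / norm (p k - Q k)) *\<^sub>R (p k - Q k) = Lq E (Q k) (Y k)" using YY by blast
  have Y2: "\<And>k. norm (Y k) \<le> K" using YY by blast
  have "bounded (range Y)" using Y2 by (auto simp: bounded_iff)
  then obtain ys \<tau> where \<tau>: "strict_mono \<tau>" and Yl: "(Y \<circ> \<tau>) \<longlonglongrightarrow> ys"
    using bounded_imp_convergent_subsequence unfolding o_def by metis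
  have Ql: "Q \<longlonglongrightarrow> qs"
  proof -
    have "(\<lambda>k. Q k - qs) \<longlonglongrightarrow> 0"
    proof (rule Lim_null_comparison)
      show "\<forall>\<^sub>F k in sequentially. norm (Q k - qs) \<le> 2 * norm (p k - qs)"
      proof (rule always_eventually, rule allI)
        fix k
        have "dist (p k) (Q k) \<le> dist (p k) qs" using Qmin qsO by blast
        hence "norm (Q k - p k) \<le> norm (p k - qs)" by (simp add: dist_norm norm_minus_commute)
        moreover have "norm (Q k - qs) \<le> norm (Q k - p k) + norm (p k - qs)"
          by (rule order_trans[OF _ norm_triangle_ineq]) simp
        ultimately show "norm (Q k - qs) \<le> 2 * norm (p k - qs)" by simp
      qed
      have "(\<lambda>k. 2 * norm (p k - qs)) \<longlonglongrightarrow> 2 * norm (qs - qs)"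
        by (intro tendsto_intros pl)
      thus "(\<lambda>k. 2 * norm (p k - qs)) \<longlonglongrightarrow> 0" by simp
    qed
    thus ?thesis by (rule LIM_zero_cancel)
  qed
  show False
  proof (rule final_contra[of "p \<circ> \<tau>" qs "Q \<circ> \<tau>" "Y \<circ> \<tau>" ys E dl "eps \<circ> \<tau>"])
    show "(p \<circ> \<tau>) \<longlonglongrightarrow> qs" by (rule LIMSEQ_subseq_LIMSEQ[OF pl \<tau>])
    show "(Q \<circ> \<tau>) \<longlonglongrightarrow> qs" by (rule LIMSEQ_subseq_LIMSEQ[OF Ql \<tau>])
    show "(Y \<circ> \<tau>) \<longlonglongrightarrow> ys" by (rule Yl)
    show "(eps \<circ> \<tau>) \<longlonglongrightarrow> 0" by (rule LIMSEQ_subseq_LIMSEQ[OF epsl \<tau>])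
    show "\<And>k e. e \<in> E \<Longrightarrow> Xe e ((Q \<circ> \<tau>) k) \<bullet> Xe e ((Q \<circ> \<tau>) k) = (dl e)\<^sup>2"
      using Oreal QO by simp
    show "\<And>k. (p \<circ> \<tau>) k \<noteq> (Q \<circ> \<tau>) k" using pQ by simp
    show "\<And>k. (1 / norm ((p \<circ> \<tau>) k - (Q \<circ> \<tau>) k)) *\<^sub>R ((p \<circ> \<tau>) k - (Q \<circ> \<tau>) k) =
        Lq E ((Q \<circ> \<tau>) k) ((Y \<circ> \<tau>) k)" using Y1 by simp
    show "\<And>k. (norm (gvec E dl ((p \<circ> \<tau>) k)))\<^sup>2 \<le> (eps \<circ> \<tau>) k * psi E dl ((p \<circ> \<tau>) k)"
      using ineq by (simp add: less_imp_le)
  qed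
qed

theorem proposition3p7:
  fixes E :: "'v::finite set set" and dl :: "'v set \<Rightarrow> real"
  assumes "is_graph E"
    and "\<forall>e\<in>E. dl e \<ge> 0"
  shows "(\<forall>r>0. \<exists>c1>0. \<forall>p::real^'n^'v. psi E dl p \<le> r \<longrightarrow>
            (norm (grad (psi E dl) p))\<^sup>2 \<le> c1 * psi E dl p)
       \<and> (\<forall>r>0. \<forall>l::nat. l \<ge> 2 \<longrightarrow> (\<exists>c2>0. \<forall>p::real^'n^'v. psi E dl p \<le> r \<longrightarrow>
            (\<forall>vs. length vs = l \<longrightarrow>
               \<bar>higher_deriv (psi E dl) vs p\<bar> \<le> c2 * prod_list (map norm vs))))
       \<and> ((\<forall>p::real^'n^'v. p \<in> realizations E dl \<longrightarrow> inf_rigid E p) \<longrightarrow>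
            (\<exists>r>0. \<exists>c3>0. \<forall>p::real^'n^'v. psi E dl p \<le> r \<longrightarrow>
               (norm (grad (psi E dl) p))\<^sup>2 \<ge> c3 * psi E dl p))"
proof (intro conjI allI impI)
  fix r :: real assume "r > 0"
  thus "\<exists>c1>0. \<forall>p::real^'n^'v. psi E dl p \<le> r \<longrightarrow>
            (norm (grad (psi E dl) p))\<^sup>2 \<le> c1 * psi E dl p" by (rule partA)
next
  fix r :: real and l :: nat assume "r > 0" "l \<ge> 2"
  thus "\<exists>c2>0. \<forall>p::real^'n^'v. psi E dl p \<le> r \<longrightarrow>
            (\<forall>vs. length vs = l \<longrightarrow>
               \<bar>higher_deriv (psi E dl) vs p\<bar> \<le> c2 * prod_list (map norm vs))" by (rule partB)
next
  assume "\<forall>p::real^'n^'v. p \<in> realizations E dl \<longrightarrow> inf_rigid E p"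
  thus "\<exists>r>0. \<exists>c3>0. \<forall>p::real^'n^'v. psi E dl p \<le> r \<longrightarrow>
               (norm (grad (psi E dl) p))\<^sup>2 \<ge> c3 * psi E dl p" by (rule partC[OF assms(1)])
qed

end
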